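(* Let $\mu>0$ and $0<\beta<1$. Let $g:\mathbb{C}\to\mathbb{R}$ be given by $g(x)=\frac{\mu+|x|^2}{2}$ for $|x|\ge\sqrt{\mu}$ and $g(x)=\sqrt{\mu}|x|$ for $|x|\le\sqrt{\mu}$. Suppose $z_0\in\partial g(x_0)$ and $|z_0|>\sqrt{\mu}/\beta^2$. Then for all $x_1\in\mathbb{C}$ with $x_1\neq x_0$ and all $z_1\in\partial g(x_1)$, $$\mathrm{Re}\big((z_1-z_0)\overline{(x_1-x_0)}\big)>(1-\beta^2)|x_1-x_0|^2.$$
   Context: $\partial g$ is the convex subdifferential (with $\mathbb{C}$ regarded as $\mathbb{R}^2$ with inner product $\mathrm{Re}(z\bar w)$); explicitly $\partial g(x)=\{x\}$ if $|x|\ge\sqrt\mu$, $\partial g(x)=\{\sqrt{\mu}\,x/|x|\}$ if $0<|x|\le\sqrt\mu$, and $\partial g(0)=\sqrt{\mu}\,\mathbb{D}$, where $\mathbb{D}$ is the closed unit disc. (In the paper $\beta$ is the constant $\beta_N=\inf\{\|Ax\|_2/\|x\|_2:x\ne0,\mathrm{card}(x)\le N\}$ of a matrix $A$, assumed to satisfy $0<\beta_N<1$; only its value matters here.) *)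

theory Defs
  imports "HOL-Analysis.Analysis"
begin

definition gfun :: "real \<Rightarrow> complex \<Rightarrow> real" where
  "gfun \<mu> x = (if cmod x \<ge> sqrt \<mu> then (\<mu> + (cmod x)^2) / 2 else sqrt \<mu> * cmod x)"

text \<open>Convex subdifferential of a real function on C, viewing C as R^2 with the
  inner product Re(z * cnj w).\<close>
definition subdiff :: "(complex \<Rightarrow> real) \<Rightarrow> complex \<Rightarrow> complex set" where
  "subdiff f x = {z. \<forall>y. f y \<ge> f x + Re (z * cnj (y - x))}"

end

theory Submission
  imports Defs
begin


lemma re_cnj: "Re (a * cnj b) = Re a * Re b + Im a * Im b" by simp
lemma cm2: "(cmod a)^2 = (Re a)^2 + (Im a)^2" by (simp add: cmod_power2)

lemma quad_id: "(cmod y)^2 = (cmod x)^2 + 2 * Re (x * cnj (y - x)) + (cmod (y - x))^2"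
  by (simp only: cm2) (simp add: power2_eq_square algebra_simps)

lemma aux_div: "(a::real) > 0 \<Longrightarrow> Y2 = a^2 + 2*r + d2 \<Longrightarrow> (a^2+Y2)/(2*a) = a + r/a + d2/(2*a)"
  by (simp add: field_simps power2_eq_square)

lemma re_scal: "Re (z * cnj (of_real c * z)) = c * (cmod z)^2"
  by (simp only: cm2) (simp add: power2_eq_square algebra_simps)

lemma re_scal2: "Re (of_real c * x * cnj w) = c * Re (x * cnj w)"
  by (simp add: algebra_simps)

lemma subgrad_unique:
  fixes f :: "complex \<Rightarrow> real"
  assumes A: "\<forall>y. f y \<ge> f x + Re (z * cnj (y - x))" and d: "\<delta> > 0" and C: "C > 0"
    and B: "\<forall>y. cmod (y - x) < \<delta> \<longrightarrow> f y \<le> f x + Re (w * cnj (y - x)) + C * (cmod (y - x))^2"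
  shows "z = w"
proof (rule ccontr)
  assume "z \<noteq> w"
  define v where "v = z - w"
  have nv: "cmod v > 0" using \<open>z \<noteq> w\<close> v_def by simp
  define e where "e = min (\<delta> / (2 * cmod v)) (1 / (2 * C))"
  have e0: "e > 0" using nv d C by (simp add: e_def)
  have "e * cmod v \<le> \<delta> / (2 * cmod v) * cmod v" using nv e_def by (intro mult_right_mono) auto
  also have "\<dots> = \<delta>/2" using nv by simp
  finally have e1: "e * cmod v < \<delta>" using d by simp
  have "C * e \<le> C * (1/(2*C))" using C e_def by (intro mult_left_mono) auto
  then have e2: "C * e < 1" using C by simp
  define y where "y = x + of_real e * v"
  have yx: "y - x = of_real e * v" by (simp add: y_def)
  have nyx: "cmod (y - x) = e * cmod v" using yx e0 by (simp add: norm_mult)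
  have r1: "Re (z * cnj (y - x)) = e * Re (z * cnj v)" by (simp add: yx algebra_simps)
  have r2: "Re (w * cnj (y - x)) = e * Re (w * cnj v)" by (simp add: yx algebra_simps)
  have "f y \<ge> f x + e * Re (z * cnj v)" using A r1 by metis
  moreover have "f y \<le> f x + e * Re (w * cnj v) + C * (e * cmod v)^2"
    using B e1 nyx r2 by metis
  ultimately have i1: "e * Re (z * cnj v) \<le> e * Re (w * cnj v) + C * (e * cmod v)^2" by linarith
  have "Re (z * cnj v) - Re (w * cnj v) = (cmod v)^2"
    by (simp only: v_def cm2) (simp add: power2_eq_square algebra_simps)
  then have "e * (cmod v)^2 = e * Re (z * cnj v) - e * Re (w * cnj v)" by (metis right_diff_distrib)
  with i1 have "e * (cmod v)^2 \<le> C * (e * cmod v)^2" by linarith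
  then have "e * (cmod v)^2 \<le> (C * e) * (e * (cmod v)^2)" by (simp add: power2_eq_square mult_ac)
  moreover have "(C * e) * (e * (cmod v)^2) < 1 * (e * (cmod v)^2)"
    using e2 e0 nv by (intro mult_strict_right_mono) auto
  ultimately show False by simp
qed

lemma g_upper: assumes "\<mu> > 0" shows "gfun \<mu> y \<le> (\<mu> + (cmod y)^2)/2"
proof -
  have "sqrt \<mu> * cmod y \<le> (\<mu> + (cmod y)^2)/2"
    using sum_squares_bound[of "sqrt \<mu>" "cmod y"] assms by (simp add: power2_eq_square)
  then show ?thesis by (simp add: gfun_def)
qed

lemma g_lower: assumes "\<mu> > 0" shows "sqrt \<mu> * cmod y \<le> gfun \<mu> y"
proof -
  have "sqrt \<mu> * cmod y \<le> (\<mu> + (cmod y)^2)/2"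
    using sum_squares_bound[of "sqrt \<mu>" "cmod y"] assms by (simp add: power2_eq_square)
  then show ?thesis by (simp add: gfun_def)
qed

lemma sub_big:
  assumes m: "\<mu> > 0" and x: "cmod x \<ge> sqrt \<mu>" and z: "z \<in> subdiff (gfun \<mu>) x"
  shows "z = x"
proof (rule subgrad_unique[of "gfun \<mu>" x z 1 "1/2"])
  show "\<forall>y. gfun \<mu> y \<ge> gfun \<mu> x + Re (z * cnj (y - x))" using z by (simp add: subdiff_def)
  show "\<forall>y. cmod (y - x) < 1 \<longrightarrow> gfun \<mu> y \<le> gfun \<mu> x + Re (x * cnj (y - x)) + 1/2 * (cmod (y - x))^2"
  proof (intro allI impI)
    fix y
    have "gfun \<mu> x = (\<mu> + (cmod x)^2)/2" using x by (simp add: gfun_def)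
    then show "gfun \<mu> y \<le> gfun \<mu> x + Re (x * cnj (y - x)) + 1/2 * (cmod (y - x))^2"
      using g_upper[OF m, of y] quad_id[of y x] by simp
  qed
qed auto

lemma sub_mid:
  assumes m: "\<mu> > 0" and x: "cmod x < sqrt \<mu>" "x \<noteq> 0" and z: "z \<in> subdiff (gfun \<mu>) x"
  shows "z = of_real (sqrt \<mu> / cmod x) * x"
proof (rule subgrad_unique[of "gfun \<mu>" x z "sqrt \<mu> - cmod x" "sqrt \<mu> / (2 * cmod x)"])
  show "\<forall>y. gfun \<mu> y \<ge> gfun \<mu> x + Re (z * cnj (y - x))" using z by (simp add: subdiff_def)
  have nx: "cmod x > 0" using x by simp
  show "sqrt \<mu> / (2 * cmod x) > 0" using nx m by simp
  show "sqrt \<mu> - cmod x > 0" using x by simp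
  show "\<forall>y. cmod (y - x) < sqrt \<mu> - cmod x \<longrightarrow> gfun \<mu> y \<le> gfun \<mu> x + Re (of_real (sqrt \<mu> / cmod x) * x * cnj (y - x)) + sqrt \<mu> / (2 * cmod x) * (cmod (y - x))^2"
  proof (intro allI impI)
    fix y assume h: "cmod (y - x) < sqrt \<mu> - cmod x"
    have "cmod y \<le> cmod x + cmod (y - x)" by (metis add.commute diff_add_cancel norm_triangle_ineq)
    then have ys: "cmod y < sqrt \<mu>" using h by simp
    have gy: "gfun \<mu> y = sqrt \<mu> * cmod y" using ys by (simp add: gfun_def)
    have gx: "gfun \<mu> x = sqrt \<mu> * cmod x" using x by (simp add: gfun_def)
    have "2 * cmod x * cmod y \<le> (cmod x)^2 + (cmod y)^2"
      using sum_squares_bound[of "cmod x" "cmod y"] by (simp add: power2_eq_square)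
    then have "cmod y \<le> ((cmod x)^2 + (cmod y)^2) / (2 * cmod x)" using nx by (simp add: field_simps)
    also have "\<dots> = cmod x + Re (x * cnj (y - x)) / cmod x + (cmod (y - x))^2 / (2 * cmod x)"
      using nx quad_id[of y x] aux_div by blast
    finally have "sqrt \<mu> * cmod y \<le> sqrt \<mu> * (cmod x + Re (x * cnj (y - x)) / cmod x + (cmod (y - x))^2 / (2 * cmod x))"
      using m by (intro mult_left_mono) auto
    moreover have "Re (of_real (sqrt \<mu> / cmod x) * x * cnj (y - x)) = sqrt \<mu> / cmod x * Re (x * cnj (y - x))"
      by (rule re_scal2)
    ultimately show "gfun \<mu> y \<le> gfun \<mu> x + Re (of_real (sqrt \<mu> / cmod x) * x * cnj (y - x)) + sqrt \<mu> / (2 * cmod x) * (cmod (y - x))^2"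
      using gy gx by (simp add: field_simps)
  qed
qed

lemma sub_zero:
  assumes m: "\<mu> > 0" and z: "z \<in> subdiff (gfun \<mu>) 0"
  shows "cmod z \<le> sqrt \<mu>"
proof (cases "z = 0")
  case False
  define y where "y = of_real (sqrt \<mu> / cmod z) * z"
  have ny: "cmod y = sqrt \<mu>" using False m by (simp add: y_def norm_mult del: of_real_divide)
  have "gfun \<mu> y \<ge> gfun \<mu> 0 + Re (z * cnj (y - 0))" using z by (simp add: subdiff_def)
  moreover have "gfun \<mu> y = \<mu>" using ny m by (simp add: gfun_def)
  moreover have "gfun \<mu> 0 = 0" using m by (simp add: gfun_def)
  moreover have "Re (z * cnj y) = sqrt \<mu> / cmod z * (cmod z)^2"
    unfolding y_def by (rule re_scal)
  ultimately have "sqrt \<mu> * cmod z \<le> \<mu>" using False m by (simp add: power2_eq_square)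
  also have "\<mu> = sqrt \<mu> * sqrt \<mu>" using m by simp
  finally show ?thesis using m mult_le_cancel_left_pos[of "sqrt \<mu>" "cmod z" "sqrt \<mu>"] by simp
qed (use m in simp)

lemma expand1: "Re ((of_real k * x1 - x0) * cnj (x1 - x0)) = k * (cmod x1)^2 - k * Re (x1 * cnj x0) - Re (x1 * cnj x0) + (cmod x0)^2"
  by (simp only: cm2) (simp add: power2_eq_square algebra_simps)

lemma expand2: "(cmod (x1 - x0))^2 = (cmod x0)^2 + (cmod x1)^2 - 2 * Re (x1 * cnj x0)"
  by (simp only: cm2) (simp add: power2_eq_square algebra_simps)

lemma expand3: "Re ((z1 - x0) * cnj (0 - x0)) = (cmod x0)^2 - Re (z1 * cnj x0)"
  by (simp only: cm2) (simp add: power2_eq_square algebra_simps)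

lemma re_le: "Re (a * cnj b) \<le> cmod a * cmod b"
  by (metis complex_Re_le_cmod complex_mod_cnj norm_mult)

lemma real_ineq:
  fixes k r R c s b D2 :: real
  assumes "k * r = s" "0 < r" "r < s" "c \<le> r * R" "b * R > s" "0 < b" "b < 1"
    "D2 = R^2 + r^2 - 2 * c" "D2 \<ge> (R - r)^2" "s > 0"
  shows "k * r^2 - k * c - c + R^2 > (1 - b) * D2"
proof -
  have "1 * r < k * r" using assms by simp
  then have "1 < k" using assms(2) by (simp only: mult_less_cancel_right)
  then have k1: "k - 1 > 0" by simp
  have Rr: "R > r"
  proof -
    have "b * R > r" using assms by linarith
    moreover have "b * R \<le> R"
    proof -
      have "0 < b * R" using assms by linarith
      then have "R > 0" using assms(6) by (simp add: zero_less_mult_iff)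
      then show ?thesis using assms by (intro mult_left_le_one_le) auto
    qed
    ultimately show ?thesis by linarith
  qed
  have e: "k * r^2 - k * c - c + R^2 - (1 - b) * D2 = (k - 1) * (r^2 - c) + b * D2"
    using assms(8) by (simp add: algebra_simps power2_eq_square)
  have "(k - 1) * (r^2 - c) \<ge> (k - 1) * (r^2 - r * R)"
    using k1 assms(4) by (intro mult_left_mono) (auto simp: power2_eq_square)
  also have "(k - 1) * (r^2 - r * R) = (s - r) * (r - R)"
    using assms(1) by (simp add: algebra_simps power2_eq_square)
  finally have t1: "(k - 1) * (r^2 - c) \<ge> (s - r) * (r - R)" .
  have t2: "b * D2 \<ge> b * (R - r)^2" using assms by (intro mult_left_mono) auto
  have "b * (R - r) > s - r"
  proof -
    have "b * r \<le> r" using assms by (intro mult_left_le_one_le) auto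
    moreover have "b * (R - r) = b * R - b * r" by (simp add: algebra_simps)
    ultimately show ?thesis using assms(5) by linarith
  qed
  then have "b * (R - r) * (R - r) > (s - r) * (R - r)" using Rr by (intro mult_strict_right_mono) auto
  then have "b * (R - r)^2 + (s - r) * (r - R) > 0" by (simp add: algebra_simps power2_eq_square)
  then show ?thesis using e t1 t2 by linarith
qed

theorem lemma4p3:
  fixes \<mu> \<beta> :: real and x0 z0 :: complex
  assumes "\<mu> > 0" and "0 < \<beta>" and "\<beta> < 1"
    and "z0 \<in> subdiff (gfun \<mu>) x0"
    and "cmod z0 > sqrt \<mu> / \<beta>^2"
  shows "\<forall>x1 z1. x1 \<noteq> x0 \<longrightarrow> z1 \<in> subdiff (gfun \<mu>) x1 \<longrightarrow>
           Re ((z1 - z0) * cnj (x1 - x0)) > (1 - \<beta>^2) * (cmod (x1 - x0))^2"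
proof (intro allI impI)
  fix x1 z1 assume ne: "x1 \<noteq> x0" and z1: "z1 \<in> subdiff (gfun \<mu>) x1"
  define s where "s = sqrt \<mu>"
  define b where "b = \<beta>^2"
  have s0: "s > 0" using assms by (simp add: s_def)
  have b0: "0 < b" "b < 1" using assms by (auto simp: b_def power_less_one_iff)
  have "s / b > s" using s0 b0 by (simp add: less_divide_eq)
  have bz: "b * cmod z0 > s" using assms(5) b0 by (simp add: s_def b_def pos_divide_less_eq mult.commute)
  have zs: "cmod z0 > s"
  proof -
    have "b * cmod z0 \<le> cmod z0" using b0 by (intro mult_left_le_one_le) auto
    then show ?thesis using bz by linarith
  qed
  have x0big: "cmod x0 \<ge> s"
  proof (rule ccontr)
    assume "\<not> cmod x0 \<ge> s"
    then have lt: "cmod x0 < sqrt \<mu>" by (simp add: s_def)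
    show False
    proof (cases "x0 = 0")
      case True
      then show False using sub_zero[OF assms(1)] assms(4) zs s_def by fastforce
    next
      case False
      then have "z0 = of_real (sqrt \<mu> / cmod x0) * x0" using sub_mid[OF assms(1) lt False assms(4)] by simp
      then have "cmod z0 = sqrt \<mu>" using False s0 s_def by (simp add: norm_mult del: of_real_divide)
      then show False using zs s_def by simp
    qed
  qed
  have zx: "z0 = x0" using sub_big[OF assms(1) _ assms(4)] x0big s_def by simp
  define R where "R = cmod x0"
  have bR: "b * R > s" using bz zx R_def by simp
  have d0: "cmod (x1 - x0) > 0" using ne by simp
  show "Re ((z1 - z0) * cnj (x1 - x0)) > (1 - \<beta>^2) * (cmod (x1 - x0))^2"
  proof (cases "cmod x1 \<ge> s")
    case True
    then have "z1 = x1" using sub_big[OF assms(1) _ z1] s_def by simp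
    then have "Re ((z1 - z0) * cnj (x1 - x0)) = (cmod (x1 - x0))^2"
      using zx by (simp only: cm2) (simp add: power2_eq_square algebra_simps)
    moreover have "(1 - b) * (cmod (x1 - x0))^2 < 1 * (cmod (x1 - x0))^2"
      using b0 d0 by (intro mult_strict_right_mono) auto
    ultimately show ?thesis by (simp add: b_def)
  next
    case False
    show ?thesis
    proof (cases "x1 = 0")
      case True
      then have zz: "cmod z1 \<le> s" using sub_zero[OF assms(1)] z1 s_def by simp
      have "Re (z1 * cnj x0) \<le> cmod z1 * R" using re_le R_def by simp
      also have "\<dots> \<le> s * R" using zz R_def by (intro mult_right_mono) auto
      finally have c: "Re (z1 * cnj x0) \<le> s * R" .
      have e: "Re ((z1 - z0) * cnj (x1 - x0)) = R^2 - Re (z1 * cnj x0)"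
        using expand3[of z1 x0] True zx R_def by simp
      have "(cmod (x1 - x0))^2 = R^2" using True R_def by simp
      moreover have "R^2 - s * R > (1 - b) * R^2"
      proof -
        have "R > 0" using x0big s0 R_def by linarith
        then have "b * R * R > s * R" using bR by (intro mult_strict_right_mono) auto
        then show ?thesis by (simp add: algebra_simps power2_eq_square)
      qed
      ultimately show ?thesis using e c by (simp add: b_def)
    next
      case x1nz: False
      have lt: "cmod x1 < sqrt \<mu>" using False s_def by simp
      have zz: "z1 = of_real (sqrt \<mu> / cmod x1) * x1" using sub_mid[OF assms(1) lt x1nz z1] .
      define r where "r = cmod x1"
      define k where "k = s / r"
      have r0: "r > 0" using x1nz r_def by simp
      have kr: "k * r = s" using r0 k_def by simp
      have e: "Re ((z1 - z0) * cnj (x1 - x0)) = k * r^2 - k * Re (x1 * cnj x0) - Re (x1 * cnj x0) + R^2"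
        using expand1[of k x1 x0] zz zx k_def r_def R_def s_def by simp
      have c: "Re (x1 * cnj x0) \<le> r * R" using re_le r_def R_def by simp
      have D2: "(cmod (x1 - x0))^2 = R^2 + r^2 - 2 * Re (x1 * cnj x0)"
        using expand2 r_def R_def by simp
      have "cmod (x1 - x0) \<ge> R - r" using norm_triangle_ineq2[of x0 x1] R_def r_def by (simp add: norm_minus_commute)
      moreover have "R - r \<ge> 0" using x0big False R_def r_def by simp
      ultimately have D3: "(cmod (x1 - x0))^2 \<ge> (R - r)^2" by (simp add: power_mono)
      have "k * r^2 - k * Re (x1 * cnj x0) - Re (x1 * cnj x0) + R^2 > (1 - b) * (cmod (x1 - x0))^2"
        by (rule real_ineq[OF kr r0 _ c bR b0 D2 D3 s0]) (use False r_def in simp)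
      then show ?thesis using e by (simp add: b_def)
    qed
  qed
qed

end
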